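(* Let $q\in\mathbb{N}$, and for $i=1,\dots,q$ let $f_i:\mathbb{R}^{n_i}\to\mathbb{R}\cup\{+\infty\}$ be proper, closed, convex and $A_i\in\mathbb{R}^{p\times n_i}$; let $c\in\mathbb{R}^p$. Consider $\min\sum_{i=1}^q f_i(x_i)$ subject to $\sum_{i=1}^qA_ix_i=c$, and assume that $\mathcal{L}_0(x_1,\dots,x_q,y)=\sum_i f_i(x_i)+y^T(\sum_iA_ix_i-c)$ has a saddle point. Let $\tilde M_0$ be the block matrix whose $(i,j)$ blocks for $1\le i,j\le q$ are zero, whose $(i,q+1)$ block is $A_i^T$, whose $(q+1,j)$ block is $-A_j$, and whose $(q+1,q+1)$ block is $0_{p\times p}$. Let $\tilde L>0$ with $\|\tilde M_0\|_2\le\tilde L$ and $\eta\in(0,\frac{1}{2\tilde L})$. For arbitrary initial points $x_{i,0},x_{i,-1}\in\mathbb{R}^{n_i}$, $y_0,y_{-1}\in\mathbb{R}^p$, define for $k\ge0$ and $i=1,\dots,q$: $$\hat x_{i,k}=x_{i,k}-2\eta A_i^Ty_k+\eta A_i^Ty_{k-1},\qquad x_{i,k+1}=\arg\min_{u_i\in\mathbb{R}^{n_i}}\Big(\eta f_i(u_i)+\tfrac12\|u_i-\hat x_{i,k}\|_2^2\Big),$$ $$y_{k+1}=y_k+2\eta\sum_{i=1}^qA_ix_{i,k}-\eta\sum_{i=1}^qA_ix_{i,k-1}-\eta c.$$ Then each $\{x_{i,k}\}$ converges, and the limit $(x_1^*,\dots,x_q^* )$ solves the optimization problem.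
   Context: $\|\cdot\|_2$ denotes the Euclidean norm on vectors and the spectral norm (largest singular value) on matrices. *)

theory Defs
  imports Complex_Main "HOL-Library.Extended_Real"
begin

text \<open>A vector of R^n is represented as a function nat => real that
vanishes at all indices >= n (coordinates 0..n-1). A real p x n matrix is a
function nat => nat => real, of which only the entries (r,s) with r<p, s<n are used.\<close>

definition inR :: "nat \<Rightarrow> (nat \<Rightarrow> real) \<Rightarrow> bool" where
  "inR n x \<longleftrightarrow> (\<forall>j\<ge>n. x j = 0)"

definition mat_vec :: "nat \<Rightarrow> nat \<Rightarrow> (nat \<Rightarrow> nat \<Rightarrow> real) \<Rightarrow> (nat \<Rightarrow> real) \<Rightarrow> (nat \<Rightarrow> real)" where
  "mat_vec m n M v = (\<lambda>r. if r < m then (\<Sum>s<n. M r s * v s) else 0)"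

definition transp :: "(nat \<Rightarrow> nat \<Rightarrow> real) \<Rightarrow> (nat \<Rightarrow> nat \<Rightarrow> real)" where
  "transp M = (\<lambda>r s. M s r)"

definition vnorm :: "nat \<Rightarrow> (nat \<Rightarrow> real) \<Rightarrow> real" where
  "vnorm n x = sqrt (\<Sum>j<n. (x j)\<^sup>2)"

definition vinner :: "nat \<Rightarrow> (nat \<Rightarrow> real) \<Rightarrow> (nat \<Rightarrow> real) \<Rightarrow> real" where
  "vinner n x y = (\<Sum>j<n. x j * y j)"

definition spec_norm :: "nat \<Rightarrow> nat \<Rightarrow> (nat \<Rightarrow> nat \<Rightarrow> real) \<Rightarrow> real" where
  "spec_norm m n M = Sup {vnorm m (mat_vec m n M v) | v. inR n v \<and> vnorm n v \<le> 1}"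

definition proper_fn :: "nat \<Rightarrow> ((nat \<Rightarrow> real) \<Rightarrow> ereal) \<Rightarrow> bool" where
  "proper_fn n f \<longleftrightarrow> (\<forall>x. inR n x \<longrightarrow> f x \<noteq> -\<infinity>) \<and> (\<exists>x. inR n x \<and> f x \<noteq> \<infinity>)"

definition convex_fn :: "nat \<Rightarrow> ((nat \<Rightarrow> real) \<Rightarrow> ereal) \<Rightarrow> bool" where
  "convex_fn n f \<longleftrightarrow> (\<forall>x y t. inR n x \<longrightarrow> inR n y \<longrightarrow> 0 < t \<longrightarrow> t < 1 \<longrightarrow>
      f (\<lambda>j. t * x j + (1 - t) * y j) \<le> ereal t * f x + ereal (1 - t) * f y)"

text \<open>closed = lower semicontinuous (equivalently: closed epigraph)\<close>
definition closed_fn :: "nat \<Rightarrow> ((nat \<Rightarrow> real) \<Rightarrow> ereal) \<Rightarrow> bool" where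
  "closed_fn n f \<longleftrightarrow> (\<forall>x u. inR n x \<longrightarrow> (\<forall>k. inR n (u k)) \<longrightarrow>
      (\<forall>j<n. (\<lambda>k. u k j) \<longlonglongrightarrow> x j) \<longrightarrow> f x \<le> liminf (\<lambda>k. f (u k)))"

text \<open>Block structure: blocks 1..q of sizes n 1, ..., n q, followed by a block of size p.\<close>
definition blk_off :: "(nat \<Rightarrow> nat) \<Rightarrow> nat \<Rightarrow> nat" where
  "blk_off n i = (\<Sum>j\<in>{1..<i}. n j)"

definition blk_of :: "nat \<Rightarrow> (nat \<Rightarrow> nat) \<Rightarrow> nat \<Rightarrow> nat" where
  "blk_of q n r = (THE i. i \<in> {1..q} \<and> blk_off n i \<le> r \<and> r < blk_off n i + n i)"

text \<open>The (N+p) x (N+p) block matrix tilde M_0, N = n_1 + ... + n_q: blocks (i,j) zero,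
  block (i,q+1) = A_i^T, block (q+1,j) = -A_j, block (q+1,q+1) = 0.\<close>
definition M0 :: "nat \<Rightarrow> (nat \<Rightarrow> nat) \<Rightarrow> nat \<Rightarrow> (nat \<Rightarrow> nat \<Rightarrow> nat \<Rightarrow> real) \<Rightarrow> (nat \<Rightarrow> nat \<Rightarrow> real)" where
  "M0 q n p A = (\<lambda>r s. let N = blk_off n (q+1) in
     if r < N \<and> N \<le> s \<and> s < N + p then
        (let i = blk_of q n r in transp (A i) (r - blk_off n i) (s - N))
     else if N \<le> r \<and> r < N + p \<and> s < N then
        (let j = blk_of q n s in - A j (r - N) (s - blk_off n j))
     else 0)"

end

theory Submission
  imports Defs "HOL-Analysis.Analysis"
begin



lemma vnorm_L2: "vnorm m x = L2_set x {..<m}"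
  by (simp add: vnorm_def L2_set_def)

lemma vnorm_nonneg: "vnorm m x \<ge> 0"
  by (simp add: vnorm_def sum_nonneg)

lemma vnorm_sq: "(vnorm m x)\<^sup>2 = vinner m x x"
  by (simp add: vnorm_def vinner_def power2_eq_square sum_nonneg)

lemma vinner_self_nonneg: "vinner m x x \<ge> 0"
  by (simp add: vinner_def sum_nonneg)

lemma vinner_sym: "vinner m x y = vinner m y x"
  by (simp add: vinner_def mult.commute)

lemma cs: "\<bar>vinner m x y\<bar> \<le> vnorm m x * vnorm m y"
proof -
  have "\<bar>vinner m x y\<bar> \<le> (\<Sum>i<m. \<bar>x i\<bar> * \<bar>y i\<bar>)"
    using sum_abs[of "\<lambda>i. x i * y i" "{..<m}"] by (simp add: abs_mult vinner_def)
  also have "\<dots> \<le> vnorm m x * vnorm m y" unfolding vnorm_L2 by (rule L2_set_mult_ineq)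
  finally show ?thesis .
qed

lemma coord_le_vnorm: "j < m \<Longrightarrow> \<bar>x j\<bar> \<le> vnorm m x"
proof -
  assume "j < m"
  have "\<bar>x j\<bar> \<le> L2_set (\<lambda>i. \<bar>x i\<bar>) {..<m}" using \<open>j<m\<close> by (intro member_le_L2_set) auto
  also have "\<dots> = vnorm m x" by (simp add: vnorm_L2 L2_set_def)
  finally show ?thesis by simp
qed

lemma coord_sq_le: "j < m \<Longrightarrow> (x j)\<^sup>2 \<le> vinner m x x"
  unfolding vinner_def power2_eq_square
  by (rule member_le_sum[of j "{..<m}" "\<lambda>i. x i * x i", simplified]) auto

lemma cs2: "\<bar>vinner m x y\<bar> \<le> (vinner m x x + vinner m y y) / 2"
proof -
  have "\<bar>vinner m x y\<bar> \<le> vnorm m x * vnorm m y" by (rule cs)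
  also have "\<dots> \<le> ((vnorm m x)\<^sup>2 + (vnorm m y)\<^sup>2)/2"
    using sum_squares_bound[of "vnorm m x" "vnorm m y"] by (simp add: algebra_simps)
  finally show ?thesis by (simp add: vnorm_sq)
qed

lemma mat_vec_diff: "mat_vec a b M (\<lambda>j. u j - v j) = (\<lambda>r. mat_vec a b M u r - mat_vec a b M v r)"
  by (auto simp: mat_vec_def sum_subtractf algebra_simps)

lemma mat_vec_scale: "mat_vec a b M (\<lambda>j. t * u j) = (\<lambda>r. t * mat_vec a b M u r)"
  by (auto simp: mat_vec_def sum_distrib_left algebra_simps)

lemma transp_adj: "vinner p y (mat_vec p m A x) = vinner m (mat_vec m p (transp A) y) x"
proof -
  have "vinner p y (mat_vec p m A x) = (\<Sum>r<p. \<Sum>s<m. y r * A r s * x s)"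
    unfolding vinner_def mat_vec_def by (simp add: sum_distrib_left mult.assoc)
  also have "\<dots> = (\<Sum>s<m. \<Sum>r<p. y r * A r s * x s)" by (rule sum.swap)
  also have "\<dots> = vinner m (mat_vec m p (transp A) y) x"
    unfolding vinner_def mat_vec_def transp_def by (simp add: sum_distrib_left mult.commute mult.left_commute)
  finally show ?thesis .
qed





definition conc :: "nat \<Rightarrow> (nat\<Rightarrow>nat) \<Rightarrow> nat \<Rightarrow> (nat \<Rightarrow> nat \<Rightarrow> real) \<Rightarrow> (nat \<Rightarrow> real) \<Rightarrow> nat \<Rightarrow> real" where
"conc q n p X Y r = (if r < blk_off n (Suc q) then X (blk_of q n r) (r - blk_off n (blk_of q n r))
   else if r < blk_off n (Suc q) + p then Y (r - blk_off n (Suc q)) else 0)"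

lemma off_Suc: "1 \<le> i \<Longrightarrow> blk_off n (Suc i) = blk_off n i + n i"
  unfolding blk_off_def by (simp add: sum.atLeastLessThan_Suc)

lemma off_mono: "i \<le> j \<Longrightarrow> blk_off n i \<le> blk_off n j"
  unfolding blk_off_def by (rule sum_mono2) auto

lemma off_le: "1 \<le> i \<Longrightarrow> i < j \<Longrightarrow> blk_off n i + n i \<le> blk_off n j"
  using off_Suc[of i n] off_mono[of "Suc i" j n] by simp

lemma blk_ex: "r < blk_off n (Suc q) \<Longrightarrow> \<exists>i\<in>{1..q}. blk_off n i \<le> r \<and> r < blk_off n i + n i"
proof (induction q)
  case 0
  then show ?case by (simp add: blk_off_def)
next
  case (Suc q)
  show ?case
  proof (cases "r < blk_off n (Suc q)")
    case True
    with Suc.IH show ?thesis by force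
  next
    case False
    with Suc.prems off_Suc[of "Suc q" n] show ?thesis
      by (intro bexI[of _ "Suc q"]) auto
  qed
qed

lemma blk_uniq: "1 \<le> i \<Longrightarrow> 1 \<le> j \<Longrightarrow> blk_off n i \<le> r \<Longrightarrow> r < blk_off n i + n i \<Longrightarrow>
   blk_off n j \<le> r \<Longrightarrow> r < blk_off n j + n j \<Longrightarrow> i = j"
  using off_le[of i j n] off_le[of j i n] by (cases i j rule: linorder_cases) auto

lemma blk_of_prop: assumes "r < blk_off n (Suc q)"
  shows "blk_of q n r \<in> {1..q} \<and> blk_off n (blk_of q n r) \<le> r \<and> r < blk_off n (blk_of q n r) + n (blk_of q n r)"
proof -
  have "\<exists>!i. i \<in> {1..q} \<and> blk_off n i \<le> r \<and> r < blk_off n i + n i"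
    using blk_ex[OF assms] blk_uniq[of _ _ n r] by (metis atLeastAtMost_iff)
  then show ?thesis unfolding blk_of_def by (rule theI')
qed

lemma blk_of_eq: assumes "i \<in> {1..q}" "t < n i" shows "blk_of q n (blk_off n i + t) = i"
  unfolding blk_of_def
proof (rule the_equality)
  show "i \<in> {1..q} \<and> blk_off n i \<le> blk_off n i + t \<and> blk_off n i + t < blk_off n i + n i" using assms by auto
next
  fix j assume "j \<in> {1..q} \<and> blk_off n j \<le> blk_off n i + t \<and> blk_off n i + t < blk_off n j + n j"
  then show "j = i" using assms blk_uniq[of j i n "blk_off n i + t"] by auto
qed

lemma off_lt_N: assumes "i \<in> {1..q}" "t < n i" shows "blk_off n i + t < blk_off n (Suc q)"
proof -
  have "blk_off n i + n i \<le> blk_off n (Suc q)" using assms off_le[of i "q+1" n] by auto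
  then show ?thesis using assms by simp
qed

lemma sum_split_add: "(\<Sum>r<a+b. g r) = (\<Sum>r<a. g r) + (\<Sum>t<b. g (a+t::nat))"
  by (induction b) (auto simp: add.assoc)

lemma sum_blocks: "(\<Sum>r<blk_off n (Suc q). g r) = (\<Sum>i\<in>{1..q}. \<Sum>t<n i. g (blk_off n i + t))"
proof (induction q)
  case 0
  then show ?case by (simp add: blk_off_def)
next
  case (Suc q)
  have "blk_off n (Suc (Suc q)) = blk_off n (Suc q) + n (Suc q)" using off_Suc[of "Suc q" n] by simp
  then have "(\<Sum>r<blk_off n (Suc (Suc q)). g r) = (\<Sum>r<blk_off n (Suc q). g r) + (\<Sum>t<n (Suc q). g (blk_off n (Suc q) + t))"
    by (simp add: sum_split_add)
  also have "\<dots> = (\<Sum>i\<in>{1..Suc q}. \<Sum>t<n i. g (blk_off n i + t))"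
    using Suc.IH by (simp add: sum.cl_ivl_Suc)
  finally show ?case .
qed

context fixes q :: nat and n :: "nat \<Rightarrow> nat" and p :: nat
begin

abbreviation "NN \<equiv> blk_off n (Suc q)"

lemma conc_lo: "i \<in> {1..q} \<Longrightarrow> t < n i \<Longrightarrow> conc q n p X Y (blk_off n i + t) = X i t"
  unfolding conc_def using off_lt_N[of i q t n] blk_of_eq[of i q t n] by simp

lemma conc_hi: "t < p \<Longrightarrow> conc q n p X Y (NN + t) = Y t"
  unfolding conc_def by simp

lemma conc_out: "NN + p \<le> r \<Longrightarrow> conc q n p X Y r = 0"
  unfolding conc_def by simp

lemma inR_conc: "inR (NN + p) (conc q n p X Y)"
  unfolding inR_def using conc_out by auto

lemma sum_D: "(\<Sum>r<NN+p. g r) = (\<Sum>i\<in>{1..q}. \<Sum>t<n i. g (blk_off n i + t)) + (\<Sum>t<p. g (NN + t))"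
  by (simp only: sum_split_add sum_blocks)

lemma vinner_conc: "vinner (NN+p) (conc q n p X Y) (conc q n p X' Y') =
   (\<Sum>i\<in>{1..q}. vinner (n i) (X i) (X' i)) + vinner p Y Y'"
  unfolding vinner_def sum_D
  by (simp add: conc_lo conc_hi)

lemma M0_skew: "M0 q n p A s r = - M0 q n p A r s"
  unfolding M0_def Let_def transp_def by auto

lemma M0_conc: "mat_vec (NN+p) (NN+p) (M0 q n p A) (conc q n p X Y) =
  conc q n p (\<lambda>i. mat_vec (n i) p (transp (A i)) Y) (\<lambda>t. - (\<Sum>i\<in>{1..q}. mat_vec p (n i) (A i) (X i) t))"
proof
  fix r
  show "mat_vec (NN+p) (NN+p) (M0 q n p A) (conc q n p X Y) r =
    conc q n p (\<lambda>i. mat_vec (n i) p (transp (A i)) Y) (\<lambda>t. - (\<Sum>i\<in>{1..q}. mat_vec p (n i) (A i) (X i) t)) r"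
  proof (cases "r < NN")
    case True
    define i where "i = blk_of q n r"
    have i: "i \<in> {1..q}" "blk_off n i \<le> r" "r < blk_off n i + n i"
      using blk_of_prop[OF True] unfolding i_def by auto
    have z: "M0 q n p A r (blk_off n j + t) = 0" if "j \<in> {1..q}" "t < n j" for j t
      using True off_lt_N[of j q t n] that unfolding M0_def Let_def by auto
    have "mat_vec (NN+p) (NN+p) (M0 q n p A) (conc q n p X Y) r
       = (\<Sum>t<p. M0 q n p A r (NN + t) * Y t)"
      using True unfolding mat_vec_def sum_D by (simp add: z conc_hi)
    also have "\<dots> = (\<Sum>t<p. A i t (r - blk_off n i) * Y t)"
      using True unfolding M0_def Let_def transp_def i_def by simp
    also have "\<dots> = conc q n p (\<lambda>i. mat_vec (n i) p (transp (A i)) Y) (\<lambda>t. - (\<Sum>i\<in>{1..q}. mat_vec p (n i) (A i) (X i) t)) r"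
      using True i unfolding conc_def i_def[symmetric] mat_vec_def transp_def by auto
    finally show ?thesis .
  next
    case False
    show ?thesis
    proof (cases "r < NN + p")
      case True
      have z: "M0 q n p A r (NN + t) = 0" for t
        using False unfolding M0_def Let_def by auto
      have e: "M0 q n p A r (blk_off n j + t) = - A j (r - NN) t" if "j \<in> {1..q}" "t < n j" for j t
        using False True off_lt_N[of j q t n] blk_of_eq[of j q t n] that unfolding M0_def Let_def by auto
      have "r - NN < p" using True False by linarith
      have "mat_vec (NN+p) (NN+p) (M0 q n p A) (conc q n p X Y) r
         = (\<Sum>j\<in>{1..q}. \<Sum>t<n j. - A j (r - NN) t * X j t)"
        using True unfolding mat_vec_def sum_D by (simp add: z e conc_lo)
      also have "\<dots> = conc q n p (\<lambda>i. mat_vec (n i) p (transp (A i)) Y) (\<lambda>t. - (\<Sum>i\<in>{1..q}. mat_vec p (n i) (A i) (X i) t)) r"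
        using True False \<open>r - NN < p\<close> unfolding conc_def mat_vec_def by (simp add: sum_negf)
      finally show ?thesis .
    next
      case F2: False
      then show ?thesis unfolding mat_vec_def conc_def by simp
    qed
  qed
qed

end




lemma vnorm_scale: "vnorm m (\<lambda>j. c * x j) = \<bar>c\<bar> * vnorm m x"
proof -
  have "(\<Sum>j<m. (c * x j)\<^sup>2) = c\<^sup>2 * (\<Sum>j<m. (x j)\<^sup>2)"
    by (simp add: sum_distrib_left power_mult_distrib)
  then show ?thesis unfolding vnorm_def by (simp add: real_sqrt_mult)
qed

lemma vnorm_cong: "(\<And>j. j < m \<Longrightarrow> x j = y j) \<Longrightarrow> vnorm m x = vnorm m y"
  unfolding vnorm_def by simp

lemma mat_vec_cong: "(\<And>j. j < b \<Longrightarrow> x j = y j) \<Longrightarrow> mat_vec a b M x = mat_vec a b M y"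
  unfolding mat_vec_def by (auto intro!: sum.cong)

lemma mat_vec_bdd:
  assumes "vnorm D w \<le> 1"
  shows "vnorm D (mat_vec D D M w) \<le> (\<Sum>r<D. \<Sum>s<D. \<bar>M r s\<bar>)"
proof -
  have "vnorm D (mat_vec D D M w) \<le> (\<Sum>r<D. \<bar>mat_vec D D M w r\<bar>)"
    unfolding vnorm_L2 by (rule L2_set_le_sum_abs)
  also have "\<dots> \<le> (\<Sum>r<D. \<Sum>s<D. \<bar>M r s\<bar>)"
  proof (rule sum_mono)
    fix r assume r: "r \<in> {..<D}"
    have "\<bar>mat_vec D D M w r\<bar> \<le> (\<Sum>s<D. \<bar>M r s * w s\<bar>)"
      using r unfolding mat_vec_def by (simp add: sum_abs)
    also have "\<dots> \<le> (\<Sum>s<D. \<bar>M r s\<bar>)"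
    proof (rule sum_mono)
      fix s assume "s \<in> {..<D}"
      then have "\<bar>w s\<bar> \<le> 1" using coord_le_vnorm[of s D w] assms by simp
      then show "\<bar>M r s * w s\<bar> \<le> \<bar>M r s\<bar>"
        by (simp add: abs_mult mult_left_le)
    qed
    finally show "\<bar>mat_vec D D M w r\<bar> \<le> (\<Sum>s<D. \<bar>M r s\<bar>)" .
  qed
  finally show ?thesis .
qed

lemma spec_bound:
  assumes "spec_norm D D M \<le> L"
  shows "vnorm D (mat_vec D D M v) \<le> L * vnorm D v"
proof -
  define S where "S = {vnorm D (mat_vec D D M v) | v. inR D v \<and> vnorm D v \<le> 1}"
  have bdd: "bdd_above S"
    unfolding S_def bdd_above_def using mat_vec_bdd by blast
  define v' where "v' = (\<lambda>j. if j < D then v j else 0)"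
  have mv': "mat_vec D D M v' = mat_vec D D M v" by (rule mat_vec_cong) (simp add: v'_def)
  have nv': "vnorm D v' = vnorm D v" by (rule vnorm_cong) (simp add: v'_def)
  show ?thesis
  proof (cases "vnorm D v = 0")
    case True
    then have "\<forall>j<D. v j = 0" using coord_le_vnorm[of _ D v] by force
    then have "mat_vec D D M v = mat_vec D D M (\<lambda>_. 0)" by (intro mat_vec_cong) auto
    then have "mat_vec D D M v = (\<lambda>_. 0)" by (auto simp: mat_vec_def fun_eq_iff)
    then show ?thesis using True by (simp add: vnorm_def)
  next
    case False
    then have pos: "vnorm D v > 0" using vnorm_nonneg[of D v] by simp
    define w where "w = (\<lambda>j. (1 / vnorm D v) * v' j)"
    have "inR D w" unfolding inR_def w_def v'_def by simp
    moreover have "vnorm D w = 1" unfolding w_def vnorm_scale nv' using pos by simp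
    ultimately have "vnorm D (mat_vec D D M w) \<in> S" unfolding S_def by auto
    then have "vnorm D (mat_vec D D M w) \<le> Sup S" using bdd by (rule cSup_upper)
    also have "Sup S \<le> L" using assms unfolding spec_norm_def S_def by simp
    finally have "vnorm D (mat_vec D D M w) \<le> L" .
    moreover have "vnorm D (mat_vec D D M w) = vnorm D (mat_vec D D M v) / vnorm D v"
      unfolding w_def mat_vec_scale vnorm_scale mv' using pos by simp
    ultimately show ?thesis using pos by (simp add: divide_le_eq mult.commute)
  qed
qed

lemma skew_zero:
  assumes skew: "\<And>r s. M s r = - M r s"
  shows "vinner D (mat_vec D D M v) v = 0"
proof -
  define S where "S = (\<Sum>r<D. \<Sum>s<D. M r s * v s * v r)"
  have "vinner D (mat_vec D D M v) v = S"
    unfolding S_def vinner_def mat_vec_def by (simp add: sum_distrib_right)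
  moreover have "S = (\<Sum>s<D. \<Sum>r<D. M r s * v s * v r)" unfolding S_def by (rule sum.swap)
  moreover have "(\<Sum>s<D. \<Sum>r<D. M r s * v s * v r) = (\<Sum>s<D. - (\<Sum>r<D. M s r * v r * v s))"
  proof -
    have *: "M r s * v s * v r = - (M s r * v r * v s)" for r s
    proof -
      have "M r s = - M s r" by (rule skew)
      then show ?thesis by simp
    qed
    have "(\<Sum>s<D. \<Sum>r<D. M r s * v s * v r) = (\<Sum>s<D. \<Sum>r<D. - (M s r * v r * v s))"
      by (intro sum.cong refl) (rule *)
    then show ?thesis by (simp add: sum_negf)
  qed
  moreover have "(\<Sum>s<D. - (\<Sum>r<D. M s r * v r * v s)) = - S"
    unfolding S_def by (simp add: sum_negf)
  ultimately show ?thesis by linarith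
qed





lemma vinner_diff_left: "vinner m (\<lambda>j. a j - b j) c = vinner m a c - vinner m b c"
  by (simp add: vinner_def sum_subtractf algebra_simps)
lemma vinner_add_left: "vinner m (\<lambda>j. a j + b j) c = vinner m a c + vinner m b c"
  by (simp add: vinner_def sum.distrib algebra_simps)
lemma vinner_scale_left: "vinner m (\<lambda>j. t * a j) c = t * vinner m a c"
  by (simp add: vinner_def sum_distrib_left algebra_simps)
lemma vinner_diff_right: "vinner m c (\<lambda>j. a j - b j) = vinner m c a - vinner m c b"
  by (simp add: vinner_def sum_subtractf algebra_simps)
lemma vinner_add_right: "vinner m c (\<lambda>j. a j + b j) = vinner m c a + vinner m c b"
  by (simp add: vinner_def sum.distrib algebra_simps)
lemma vinner_scale_right: "vinner m c (\<lambda>j. t * a j) = t * vinner m c a"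
  by (simp add: vinner_def sum_distrib_left algebra_simps)
lemmas vinner_lin = vinner_diff_left vinner_add_left vinner_scale_left
   vinner_diff_right vinner_add_right vinner_scale_right

locale frb_core =
  fixes D :: nat and M :: "nat \<Rightarrow> nat \<Rightarrow> real" and L \<eta> :: real
    and Z :: "int \<Rightarrow> nat \<Rightarrow> real" and Zs :: "nat \<Rightarrow> real"
  assumes skew: "\<And>r s. M s r = - M r s"
    and bound: "\<And>v. vnorm D (mat_vec D D M v) \<le> L * vnorm D v"
    and Lpos: "L > 0" and etapos: "\<eta> > 0" and small: "2*\<eta>*L < 1"
    and G: "\<And>k. k \<ge> 0 \<Longrightarrow> vinner D (\<lambda>j. Z k j - Z (k+1) j - \<eta> * (2 * mat_vec D D M (Z k) j
             - mat_vec D D M (Z (k-1)) j - mat_vec D D M Zs j)) (\<lambda>j. Z (k+1) j - Zs j) \<ge> 0"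
begin

abbreviation mv where "mv v \<equiv> mat_vec D D M v"
definition e where "e k = (\<lambda>j. Z k j - Zs j)"
definition d where "d k = (\<lambda>j. Z k j - Z (k-1) j)"
definition EE where "EE k = vinner D (e k) (e k)"
definition DD where "DD k = vinner D (d k) (d k)"
definition PP where "PP k = vinner D (mv (d k)) (e k)"
definition psi where "psi k = EE k - 2*\<eta>*PP k + \<eta>*L*DD k"

lemma inner_bound: "\<bar>vinner D (mv a) b\<bar> \<le> L * vnorm D a * vnorm D b"
proof -
  have "\<bar>vinner D (mv a) b\<bar> \<le> vnorm D (mv a) * vnorm D b" by (rule cs)
  also have "\<dots> \<le> L * vnorm D a * vnorm D b"
    using bound[of a] vnorm_nonneg[of D b] by (simp add: mult_right_mono)
  finally show ?thesis .
qed

lemma inner_bound2: "\<bar>vinner D (mv a) b\<bar> \<le> L * vinner D a a / 2 + L * vinner D b b / 2"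
proof -
  have "\<bar>vinner D (mv a) b\<bar> \<le> L * (vnorm D a * vnorm D b)" using inner_bound[of a b] by (simp add: mult.assoc)
  also have "\<dots> \<le> L * (((vnorm D a)\<^sup>2 + (vnorm D b)\<^sup>2)/2)"
    using sum_squares_bound[of "vnorm D a" "vnorm D b"] Lpos by (intro mult_left_mono) auto
  finally show ?thesis by (simp add: vnorm_sq algebra_simps)
qed

lemma DD_nonneg: "DD k \<ge> 0" unfolding DD_def by (rule vinner_self_nonneg)
lemma EE_nonneg: "EE k \<ge> 0" unfolding EE_def by (rule vinner_self_nonneg)

lemma step: assumes "k \<ge> 0" shows "psi (k+1) \<le> psi k - (1 - 2*\<eta>*L) * DD (k+1)"
proof -
  have gv: "(\<lambda>j. Z k j - Z (k+1) j - \<eta> * (2 * mv (Z k) j - mv (Z (k-1)) j - mv Zs j))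
     = (\<lambda>j. e k j - e (k+1) j - \<eta> * (mv (e (k+1)) j - mv (d (k+1)) j + mv (d k) j))"
    unfolding e_def d_def mat_vec_diff by (auto simp: fun_eq_iff algebra_simps)
  have g: "0 \<le> vinner D (\<lambda>j. e k j - e (k+1) j - \<eta> * (mv (e (k+1)) j - mv (d (k+1)) j + mv (d k) j)) (e (k+1))"
    using G[OF assms] unfolding gv by (simp add: e_def)
  have ed: "e (k+1) = (\<lambda>j. e k j + d (k+1) j)" unfolding e_def d_def by auto
  define X where "X = vinner D (e k) (d (k+1))"
  define Q where "Q = vinner D (mv (d k)) (d (k+1))"
  have sk: "vinner D (mv (e (k+1))) (e (k+1)) = 0" by (rule skew_zero[OF skew])
  have e1: "vinner D (e k) (e (k+1)) = EE k + X"
    unfolding X_def EE_def by (subst ed) (simp only: vinner_lin)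
  have e2: "EE (k+1) = EE k + 2 * X + DD (k+1)"
  proof -
    have "EE (k+1) = vinner D (e k) (e k) + vinner D (e k) (d (k+1)) + (vinner D (d (k+1)) (e k) + vinner D (d (k+1)) (d (k+1)))"
      unfolding EE_def ed by (simp only: vinner_lin)
    then show ?thesis unfolding X_def EE_def DD_def using vinner_sym[of D "d (k+1)" "e k"] by simp
  qed
  have e3: "vinner D (mv (d k)) (e (k+1)) = PP k + Q"
    unfolding PP_def Q_def by (subst ed) (simp only: vinner_lin)
  have gg: "0 \<le> vinner D (e k) (e (k+1)) - EE (k+1) - \<eta> * (vinner D (mv (e (k+1))) (e (k+1))
      - PP (k+1) + vinner D (mv (d k)) (e (k+1)))"
    using g unfolding EE_def PP_def by (simp only: vinner_lin)
  have qb: "\<bar>Q\<bar> \<le> L * DD k / 2 + L * DD (k+1) / 2"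
    unfolding Q_def DD_def by (rule inner_bound2)
  have qb2: "- (\<eta> * Q) \<le> \<eta> * L * DD k / 2 + \<eta> * L * DD (k+1) / 2"
  proof -
    have "- Q \<le> L * DD k / 2 + L * DD (k+1) / 2" using qb by linarith
    then have "\<eta> * (- Q) \<le> \<eta> * (L * DD k / 2 + L * DD (k+1) / 2)" using etapos by (intro mult_left_mono) auto
    then show ?thesis by (simp add: algebra_simps)
  qed
  have gg2: "0 \<le> EE k + X - EE (k+1) + \<eta> * PP (k+1) - \<eta> * PP k - \<eta> * Q"
    using gg unfolding sk e1 e3 by (simp add: algebra_simps)
  have "psi (k+1) = EE (k+1) - 2*\<eta>*PP (k+1) + \<eta>*L*DD (k+1)" by (simp add: psi_def)
  show ?thesis using gg2 qb2 e2 unfolding psi_def by (simp add: algebra_simps)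
qed

lemma lower: "(1 - \<eta>*L) * EE k \<le> psi k"
proof -
  have "\<bar>PP k\<bar> \<le> L * DD k / 2 + L * EE k / 2" unfolding PP_def DD_def EE_def by (rule inner_bound2)
  then have "\<eta> * PP k \<le> \<eta> * (L * DD k / 2 + L * EE k / 2)" using etapos by (intro mult_left_mono) auto
  then show ?thesis unfolding psi_def by (simp add: algebra_simps)
qed

end




context frb_core begin

lemma vnorm_sqrt: "vnorm D x = sqrt (vinner D x x)"
  unfolding vnorm_def vinner_def by (simp add: power2_eq_square)

lemma conv:
  shows "convergent (\<lambda>j::nat. EE (int j))" and "(\<lambda>j::nat. DD (int j)) \<longlonglongrightarrow> 0"
    and "\<exists>B. \<forall>j::nat. EE (int j) \<le> B"
proof -
  define Psi where "Psi j = psi (int j)" for j :: nat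
  have c1: "0 < 1 - 2*\<eta>*L" using small by simp
  have c2: "0 < 1 - \<eta>*L" using small etapos Lpos by simp
  have stp: "Psi (Suc j) \<le> Psi j - (1 - 2*\<eta>*L) * DD (int (Suc j))" for j
    using step[of "int j"] unfolding Psi_def by (simp add: add.commute)
  have dec: "decseq Psi"
    unfolding decseq_Suc_iff using stp DD_nonneg c1
    by (smt (verit, best) mult_nonneg_nonneg)
  have nn: "0 \<le> Psi j" for j
    using lower[of "int j"] EE_nonneg[of "int j"] c2 unfolding Psi_def
    by (smt (verit) mult_nonneg_nonneg)
  obtain l where l: "Psi \<longlonglongrightarrow> l" using decseq_convergent[OF dec, of 0] nn by blast
  have ddb: "DD (int (Suc j)) \<le> (Psi j - Psi (Suc j)) / (1 - 2*\<eta>*L)" for j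
    using stp[of j] c1 by (simp add: le_divide_eq mult.commute)
  have lim0: "(\<lambda>j. (Psi j - Psi (Suc j)) / (1 - 2*\<eta>*L)) \<longlonglongrightarrow> 0"
    using tendsto_divide[OF tendsto_diff[OF l LIMSEQ_Suc[OF l]] tendsto_const[of "1 - 2*\<eta>*L"]] c1 by simp
  have "(\<lambda>j. DD (int (Suc j))) \<longlonglongrightarrow> 0"
    apply (rule real_tendsto_sandwich[OF always_eventually always_eventually tendsto_const lim0])
     apply (rule allI, rule DD_nonneg)
    apply (rule allI, rule ddb)
    done
  then show DDlim: "(\<lambda>j::nat. DD (int j)) \<longlonglongrightarrow> 0" by (rule LIMSEQ_imp_Suc)
  define B where "B = Psi 0 / (1 - \<eta>*L)"
  have EB: "EE (int j) \<le> B" for j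
  proof -
    have "(1 - \<eta>*L) * EE (int j) \<le> Psi 0" using lower[of "int j"] decseqD[OF dec, of 0 j] unfolding Psi_def by simp
    then show ?thesis unfolding B_def using c2 by (simp add: le_divide_eq mult.commute)
  qed
  then show "\<exists>B. \<forall>j::nat. EE (int j) \<le> B" by blast
  have Bnn: "0 \<le> B" using EB[of 0] EE_nonneg[of 0] by simp
  have PPlim: "(\<lambda>j. PP (int j)) \<longlonglongrightarrow> 0"
  proof (rule Lim_null_comparison)
    show "\<forall>\<^sub>F j in sequentially. norm (PP (int j)) \<le> L * sqrt (DD (int j)) * sqrt B"
    proof (rule always_eventually, rule allI)
      fix j
      have "norm (PP (int j)) \<le> L * vnorm D (d (int j)) * vnorm D (e (int j))"
        unfolding PP_def real_norm_def by (rule inner_bound)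
      also have "\<dots> \<le> L * sqrt (DD (int j)) * sqrt B"
        unfolding vnorm_sqrt DD_def[symmetric] EE_def[symmetric]
        using EB[of j] Lpos DD_nonneg[of "int j"] by (intro mult_left_mono) (auto intro: real_sqrt_le_mono)
      finally show "norm (PP (int j)) \<le> L * sqrt (DD (int j)) * sqrt B" .
    qed
    show "(\<lambda>j. L * sqrt (DD (int j)) * sqrt B) \<longlonglongrightarrow> 0"
      using tendsto_mult[OF tendsto_mult[OF tendsto_const[of L] tendsto_real_sqrt[OF DDlim]] tendsto_const[of "sqrt B"]]
      by simp
  qed
  have "(\<lambda>j. Psi j + 2*\<eta>*PP (int j) - \<eta>*L*DD (int j)) \<longlonglongrightarrow> l + 2*\<eta>*0 - \<eta>*L*0"
    by (intro tendsto_intros l PPlim DDlim)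
  moreover have "Psi j + 2*\<eta>*PP (int j) - \<eta>*L*DD (int j) = EE (int j)" for j
    unfolding Psi_def psi_def by simp
  ultimately show "convergent (\<lambda>j::nat. EE (int j))" unfolding convergent_def by auto
qed

end




lemma eps_le:
  fixes X Y C :: real
  assumes "\<And>t. 0 < t \<Longrightarrow> t < 1 \<Longrightarrow> X \<le> Y + t * C"
  shows "X \<le> Y"
proof (rule ccontr)
  assume "\<not> X \<le> Y"
  then have XY: "X > Y" by simp
  show False
  proof (cases "C \<le> 0")
    case True
    then show ?thesis using assms[of "1/2"] XY by simp
  next
    case False
    define t where "t = min (1/2) ((X - Y) / (2*C))"
    have t0: "0 < t" unfolding t_def using XY False by simp
    have t1: "t < 1" unfolding t_def by simp
    have "t * C \<le> ((X - Y) / (2*C)) * C" unfolding t_def using False by (intro mult_right_mono) auto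
    also have "\<dots> = (X - Y)/2" using False by simp
    finally show ?thesis using assms[OF t0 t1] XY by simp
  qed
qed

lemma argmin_fin:
  assumes pr: "proper_fn m F" and eta: "\<eta> > 0"
    and am: "is_arg_min (\<lambda>u. ereal \<eta> * F u + ereal (h u)) (inR m) x'"
  shows "inR m x' \<and> F x' \<noteq> \<infinity> \<and> F x' \<noteq> -\<infinity>"
proof -
  have in': "inR m x'" using am unfolding is_arg_min_def by simp
  obtain w0 where w0: "inR m w0" "F w0 \<noteq> \<infinity>" using pr unfolding proper_fn_def by blast
  have "F w0 \<noteq> -\<infinity>" using pr w0 unfolding proper_fn_def by blast
  then obtain b where b: "F w0 = ereal b" using w0 by (cases "F w0") auto
  have le: "ereal \<eta> * F x' + ereal (h x') \<le> ereal \<eta> * F w0 + ereal (h w0)"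
    using am w0 unfolding is_arg_min_def by (meson not_le)
  have "F x' \<noteq> \<infinity>"
  proof
    assume "F x' = \<infinity>"
    then have "ereal \<eta> * F x' + ereal (h x') = \<infinity>" using eta by simp
    with le b show False by simp
  qed
  moreover have "F x' \<noteq> -\<infinity>" using pr in' unfolding proper_fn_def by blast
  ultimately show ?thesis using in' by simp
qed

lemma prox_subgrad:
  assumes cv: "convex_fn m F" and pr: "proper_fn m F" and eta: "\<eta> > 0"
    and am: "is_arg_min (\<lambda>u. ereal \<eta> * F u + ereal ((1/2) * (vnorm m (\<lambda>j. u j - w j))\<^sup>2)) (inR m) x'"
    and u: "inR m u" "F u \<noteq> \<infinity>"
  shows "\<eta> * real_of_ereal (F x') + vinner m (\<lambda>j. w j - x' j) (\<lambda>j. u j - x' j) \<le> \<eta> * real_of_ereal (F u)"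
proof -
  have fx: "inR m x'" "F x' \<noteq> \<infinity>" "F x' \<noteq> -\<infinity>" using argmin_fin[OF pr eta am] by auto
  define a where "a = real_of_ereal (F x')"
  define b where "b = real_of_ereal (F u)"
  have Fa: "F x' = ereal a" unfolding a_def using fx by (cases "F x'") auto
  have "F u \<noteq> -\<infinity>" using pr u unfolding proper_fn_def by blast
  then have Fb: "F u = ereal b" unfolding b_def using u by (cases "F u") auto
  define S1 where "S1 = vinner m (\<lambda>j. x' j - w j) (\<lambda>j. u j - x' j)"
  define S2 where "S2 = vinner m (\<lambda>j. u j - x' j) (\<lambda>j. u j - x' j)"
  define Q0 where "Q0 = vinner m (\<lambda>j. x' j - w j) (\<lambda>j. x' j - w j)"
  have key: "\<eta> * a \<le> \<eta> * b + S1 + t * (S2/2)" if t: "0 < t" "t < 1" for t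
  proof -
    define ut where "ut = (\<lambda>j. t * u j + (1 - t) * x' j)"
    have inut: "inR m ut" using u(1) fx(1) unfolding inR_def ut_def by simp
    have "F ut \<le> ereal t * F u + ereal (1 - t) * F x'"
      using cv u(1) fx(1) t unfolding convex_fn_def ut_def by blast
    also have "\<dots> = ereal (t * b + (1 - t) * a)" unfolding Fa Fb by simp
    finally have Fut: "F ut \<le> ereal (t * b + (1 - t) * a)" .
    have "F ut \<noteq> -\<infinity>" using pr inut unfolding proper_fn_def by blast
    then obtain cc where cc: "F ut = ereal cc" using Fut by (cases "F ut") auto
    have ccb: "cc \<le> t * b + (1 - t) * a" using Fut cc by simp
    have "ereal \<eta> * F x' + ereal ((1/2) * (vnorm m (\<lambda>j. x' j - w j))\<^sup>2)
        \<le> ereal \<eta> * F ut + ereal ((1/2) * (vnorm m (\<lambda>j. ut j - w j))\<^sup>2)"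
      using am inut unfolding is_arg_min_def by (meson not_le)
    then have ineq: "\<eta> * a + (1/2) * Q0 \<le> \<eta> * cc + (1/2) * vinner m (\<lambda>j. ut j - w j) (\<lambda>j. ut j - w j)"
      unfolding Fa cc vnorm_sq Q0_def by simp
    have uw: "(\<lambda>j. ut j - w j) = (\<lambda>j. (x' j - w j) + t * (u j - x' j))"
      unfolding ut_def by (auto simp: algebra_simps)
    have q: "vinner m (\<lambda>j. ut j - w j) (\<lambda>j. ut j - w j) = Q0 + 2 * t * S1 + t * t * S2"
    proof -
      have "vinner m (\<lambda>j. ut j - w j) (\<lambda>j. ut j - w j) =
        (\<Sum>j<m. (x' j - w j) * (x' j - w j) + 2 * t * ((x' j - w j) * (u j - x' j)) + t * t * ((u j - x' j) * (u j - x' j)))"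
        unfolding uw vinner_def by (intro sum.cong refl) (simp add: algebra_simps)
      also have "\<dots> = Q0 + 2 * t * S1 + t * t * S2"
        unfolding Q0_def S1_def S2_def vinner_def by (simp add: sum.distrib sum_distrib_left)
      finally show ?thesis .
    qed
    have "\<eta> * cc \<le> \<eta> * (t * b + (1 - t) * a)" using ccb eta by (intro mult_left_mono) auto
    then have "t * (\<eta> * a) \<le> t * (\<eta> * b + S1 + t * (S2/2))"
      using ineq q by (simp add: algebra_simps)
    then show ?thesis using t by simp
  qed
  have "\<eta> * a \<le> \<eta> * b + S1" by (rule eps_le[OF key])
  moreover have "vinner m (\<lambda>j. w j - x' j) (\<lambda>j. u j - x' j) = - S1"
    unfolding S1_def by (simp add: vinner_def sum_negf[symmetric] algebra_simps)
  ultimately show ?thesis unfolding a_def b_def by simp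
qed

lemma mono_step:
  assumes cv: "convex_fn m F" and pr: "proper_fn m F" and eta: "\<eta> > 0"
    and am: "is_arg_min (\<lambda>u. ereal \<eta> * F u + ereal ((1/2) * (vnorm m (\<lambda>j. u j - w j))\<^sup>2)) (inR m) x'"
    and u0: "inR m u0" "F u0 \<noteq> \<infinity>"
    and opt: "\<And>u. inR m u \<Longrightarrow> F u0 + ereal (vinner m g u0) \<le> F u + ereal (vinner m g u)"
  shows "vinner m (\<lambda>t. w t - x' t + \<eta> * g t) (\<lambda>t. x' t - u0 t) \<ge> 0"
proof -
  have fx: "inR m x'" "F x' \<noteq> \<infinity>" "F x' \<noteq> -\<infinity>" using argmin_fin[OF pr eta am] by auto
  have sg: "\<eta> * real_of_ereal (F x') + vinner m (\<lambda>j. w j - x' j) (\<lambda>j. u0 j - x' j) \<le> \<eta> * real_of_ereal (F u0)"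
    by (rule prox_subgrad[OF cv pr eta am u0])
  have "F u0 \<noteq> -\<infinity>" using pr u0 unfolding proper_fn_def by blast
  then obtain b where Fb: "F u0 = ereal b" using u0 by (cases "F u0") auto
  obtain a where Fa: "F x' = ereal a" using fx by (cases "F x'") auto
  have "b + vinner m g u0 \<le> a + vinner m g x'" using opt[OF fx(1)] unfolding Fa Fb by simp
  then have "\<eta> * b \<le> \<eta> * (a + vinner m g x' - vinner m g u0)" using eta by (intro mult_left_mono) auto
  then have "0 \<le> - vinner m (\<lambda>j. w j - x' j) (\<lambda>j. u0 j - x' j) + \<eta> * (vinner m g x' - vinner m g u0)"
    using sg unfolding Fa Fb by (simp add: algebra_simps)
  moreover have "vinner m (\<lambda>t. w t - x' t + \<eta> * g t) (\<lambda>t. x' t - u0 t)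
     = - vinner m (\<lambda>j. w j - x' j) (\<lambda>j. u0 j - x' j) + \<eta> * (vinner m g x' - vinner m g u0)"
    by (simp add: vinner_def sum_negf[symmetric] sum_subtractf[symmetric] sum.distrib[symmetric] sum_distrib_left algebra_simps)
  ultimately show ?thesis by simp
qed

lemma ereal_sum_fin:
  assumes "finite T" "\<And>j. j \<in> T \<Longrightarrow> h j \<noteq> \<infinity> \<and> h j \<noteq> -\<infinity>"
  shows "sum h T = ereal (\<Sum>j\<in>T. real_of_ereal (h j))"
proof -
  have "sum h T = (\<Sum>j\<in>T. ereal (real_of_ereal (h j)))"
    using assms(2) by (intro sum.cong refl) (auto simp: ereal_real)
  then show ?thesis by simp
qed

lemma bolzano_coords:
  fixes X :: "nat \<Rightarrow> nat \<Rightarrow> real"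
  assumes "\<And>r. r < D \<Longrightarrow> bounded (range (\<lambda>j. X j r))"
  shows "\<exists>\<sigma>. strict_mono \<sigma> \<and> (\<forall>r<D. convergent (\<lambda>j. X (\<sigma> j) r))"
  using assms
proof (induction D)
  case 0
  show ?case by (rule exI[of _ id]) (simp add: strict_mono_def)
next
  case (Suc D)
  then obtain \<sigma> where s: "strict_mono \<sigma>" "\<forall>r<D. convergent (\<lambda>j. X (\<sigma> j) r)" by auto
  have "bounded (range (\<lambda>j. X (\<sigma> j) D))"
    using Suc.prems[of D] by (rule bounded_subset) auto
  then obtain l \<tau> where t: "strict_mono \<tau>" "((\<lambda>j. X (\<sigma> j) D) \<circ> \<tau>) \<longlonglongrightarrow> l"
    using bounded_imp_convergent_subsequence by blast
  have "strict_mono (\<sigma> \<circ> \<tau>)" using s(1) t(1) by (rule strict_mono_o)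
  moreover have "\<forall>r<Suc D. convergent (\<lambda>j. X ((\<sigma> \<circ> \<tau>) j) r)"
  proof (intro allI impI)
    fix r assume r: "r < Suc D"
    show "convergent (\<lambda>j. X ((\<sigma> \<circ> \<tau>) j) r)"
    proof (cases "r = D")
      case True
      then show ?thesis using t(2) unfolding convergent_def by (auto simp: o_def)
    next
      case False
      then have "r < D" using r by simp
      then obtain L where "(\<lambda>j. X (\<sigma> j) r) \<longlonglongrightarrow> L" using s(2) unfolding convergent_def by blast
      from LIMSEQ_subseq_LIMSEQ[OF this t(1)] show ?thesis unfolding convergent_def by (auto simp: o_def)
    qed
  qed
  ultimately show ?case by blast
qed





locale frbmain =
  fixes q p :: nat
    and n :: "nat \<Rightarrow> nat"
    and f :: "nat \<Rightarrow> (nat \<Rightarrow> real) \<Rightarrow> ereal"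
    and A :: "nat \<Rightarrow> nat \<Rightarrow> nat \<Rightarrow> real"
    and c :: "nat \<Rightarrow> real"
    and Lt \<eta> :: real
    and x :: "nat \<Rightarrow> int \<Rightarrow> nat \<Rightarrow> real"
    and y :: "int \<Rightarrow> nat \<Rightarrow> real"
  assumes f_proper: "\<forall>i\<in>{1..q}. proper_fn (n i) (f i)"
    and f_closed: "\<forall>i\<in>{1..q}. closed_fn (n i) (f i)"
    and f_convex: "\<forall>i\<in>{1..q}. convex_fn (n i) (f i)"
    and c_in: "inR p c"
    and saddle: "\<exists>xs ys. (\<forall>i\<in>{1..q}. inR (n i) (xs i)) \<and> inR p ys \<and>
        (\<forall>xx yy. (\<forall>i\<in>{1..q}. inR (n i) (xx i)) \<longrightarrow> inR p yy \<longrightarrow>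
           (\<Sum>i\<in>{1..q}. f i (xs i)) + ereal (vinner p yy (\<lambda>r. (\<Sum>i\<in>{1..q}. mat_vec p (n i) (A i) (xs i) r) - c r))
             \<le> (\<Sum>i\<in>{1..q}. f i (xs i)) + ereal (vinner p ys (\<lambda>r. (\<Sum>i\<in>{1..q}. mat_vec p (n i) (A i) (xs i) r) - c r))
           \<and> (\<Sum>i\<in>{1..q}. f i (xs i)) + ereal (vinner p ys (\<lambda>r. (\<Sum>i\<in>{1..q}. mat_vec p (n i) (A i) (xs i) r) - c r))
             \<le> (\<Sum>i\<in>{1..q}. f i (xx i)) + ereal (vinner p ys (\<lambda>r. (\<Sum>i\<in>{1..q}. mat_vec p (n i) (A i) (xx i) r) - c r)))"
    and Lt_pos: "Lt > 0"
    and M0_bound: "spec_norm (blk_off n (q+1) + p) (blk_off n (q+1) + p) (M0 q n p A) \<le> Lt"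
    and eta: "0 < \<eta>" "\<eta> < 1 / (2 * Lt)"
    and init_x: "\<forall>i\<in>{1..q}. inR (n i) (x i 0) \<and> inR (n i) (x i (-1))"
    and init_y: "inR p (y 0) \<and> inR p (y (-1))"
    and x_step: "\<forall>k\<ge>0. \<forall>i\<in>{1..q}.
        (let xhat = (\<lambda>j. x i k j - 2 * \<eta> * mat_vec (n i) p (transp (A i)) (y k) j
                          + \<eta> * mat_vec (n i) p (transp (A i)) (y (k - 1)) j)
         in is_arg_min (\<lambda>u. ereal \<eta> * f i u + ereal ((1/2) * (vnorm (n i) (\<lambda>j. u j - xhat j))\<^sup>2))
                       (inR (n i)) (x i (k + 1)))"
    and y_step: "\<forall>k\<ge>0. y (k + 1) = (\<lambda>r. y k r
        + 2 * \<eta> * (\<Sum>i\<in>{1..q}. mat_vec p (n i) (A i) (x i k) r)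
        - \<eta> * (\<Sum>i\<in>{1..q}. mat_vec p (n i) (A i) (x i (k - 1)) r)
        - \<eta> * c r)"
begin

abbreviation T where "T \<equiv> {1..q}"
abbreviation AT where "AT i v \<equiv> mat_vec (n i) p (transp (A i)) v"
definition Ax where "Ax X r = (\<Sum>i\<in>T. mat_vec p (n i) (A i) (X i) r)"
definition xhat where "xhat i k = (\<lambda>j. x i k j - 2 * \<eta> * AT i (y k) j + \<eta> * AT i (y (k - 1)) j)"

definition sol where "sol xs ys \<longleftrightarrow> (\<forall>i\<in>T. inR (n i) (xs i) \<and> f i (xs i) \<noteq> \<infinity> \<and>
    (\<forall>u. inR (n i) u \<longrightarrow> f i (xs i) + ereal (vinner (n i) (AT i ys) (xs i)) \<le> f i u + ereal (vinner (n i) (AT i ys) u)))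
   \<and> inR p ys \<and> (\<forall>r<p. Ax xs r = c r)"

lemma xstep: "k \<ge> 0 \<Longrightarrow> i \<in> T \<Longrightarrow>
  is_arg_min (\<lambda>u. ereal \<eta> * f i u + ereal ((1/2) * (vnorm (n i) (\<lambda>j. u j - xhat i k j))\<^sup>2)) (inR (n i)) (x i (k + 1))"
  using x_step unfolding xhat_def Let_def by auto

lemma ystep: "k \<ge> 0 \<Longrightarrow> y (k + 1) r = y k r + 2 * \<eta> * Ax (\<lambda>i. x i k) r - \<eta> * Ax (\<lambda>i. x i (k - 1)) r - \<eta> * c r"
  using y_step unfolding Ax_def by auto

lemma fin_x: "k \<ge> 0 \<Longrightarrow> i \<in> T \<Longrightarrow> inR (n i) (x i (k+1)) \<and> f i (x i (k+1)) \<noteq> \<infinity> \<and> f i (x i (k+1)) \<noteq> -\<infinity>"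
  using argmin_fin[OF _ eta(1) xstep] f_proper by blast

lemma not_minf: "i \<in> T \<Longrightarrow> inR (n i) u \<Longrightarrow> f i u \<noteq> -\<infinity>"
  using f_proper unfolding proper_fn_def by blast

lemma sum_upd: "i \<in> T \<Longrightarrow> (\<Sum>j\<in>T. h j ((xs(i := u)) j)) = h i u + (\<Sum>j\<in>T - {i}. h j (xs j))"
  by (simp add: sum.remove)

lemma sum_rem: "i \<in> T \<Longrightarrow> (\<Sum>j\<in>T. h j (xs j)) = h i (xs i) + (\<Sum>j\<in>T - {i}. h j (xs j))"
  by (simp add: sum.remove)

lemma saddle_sol: "\<exists>xs ys. sol xs ys"
proof -
  obtain xs ys where xs: "\<forall>i\<in>T. inR (n i) (xs i)" and ys: "inR p ys" and
    sd: "\<And>xx yy. (\<forall>i\<in>T. inR (n i) (xx i)) \<Longrightarrow> inR p yy \<Longrightarrow>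
           (\<Sum>i\<in>T. f i (xs i)) + ereal (vinner p yy (\<lambda>r. Ax xs r - c r))
             \<le> (\<Sum>i\<in>T. f i (xs i)) + ereal (vinner p ys (\<lambda>r. Ax xs r - c r))
           \<and> (\<Sum>i\<in>T. f i (xs i)) + ereal (vinner p ys (\<lambda>r. Ax xs r - c r))
             \<le> (\<Sum>i\<in>T. f i (xx i)) + ereal (vinner p ys (\<lambda>r. Ax xx r - c r))"
    using saddle unfolding Ax_def by blast
  have "\<forall>i\<in>T. \<exists>w. inR (n i) w \<and> f i w \<noteq> \<infinity>" using f_proper unfolding proper_fn_def by blast
  then obtain w where w: "\<And>i. i \<in> T \<Longrightarrow> inR (n i) (w i) \<and> f i (w i) \<noteq> \<infinity>" by metis
  have SFw: "(\<Sum>i\<in>T. f i (w i)) \<noteq> \<infinity>" using w by (simp add: sum_Pinfty)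
  have "(\<Sum>i\<in>T. f i (xs i)) + ereal (vinner p ys (\<lambda>r. Ax xs r - c r))
             \<le> (\<Sum>i\<in>T. f i (w i)) + ereal (vinner p ys (\<lambda>r. Ax w r - c r))"
    using sd[of w ys] w ys by blast
  then have SFx: "(\<Sum>i\<in>T. f i (xs i)) \<noteq> \<infinity>" using SFw by auto
  have fxs: "f i (xs i) \<noteq> \<infinity> \<and> f i (xs i) \<noteq> -\<infinity>" if "i \<in> T" for i
    using SFx that xs not_minf by (auto simp: sum_Pinfty)
  define Fx where "Fx = (\<Sum>i\<in>T. real_of_ereal (f i (xs i)))"
  have SFe: "(\<Sum>i\<in>T. f i (xs i)) = ereal Fx" unfolding Fx_def by (rule ereal_sum_fin) (auto simp: fxs)
  define yy where "yy = (\<lambda>r. if r < p then ys r + (Ax xs r - c r) else 0)"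
  have "inR p yy" unfolding yy_def inR_def by simp
  then have "vinner p yy (\<lambda>r. Ax xs r - c r) \<le> vinner p ys (\<lambda>r. Ax xs r - c r)"
    using sd[of xs yy] xs unfolding SFe by simp
  moreover have "vinner p yy (\<lambda>r. Ax xs r - c r) = vinner p ys (\<lambda>r. Ax xs r - c r) + vinner p (\<lambda>r. Ax xs r - c r) (\<lambda>r. Ax xs r - c r)"
  proof -
    have "vinner p yy (\<lambda>r. Ax xs r - c r) = vinner p (\<lambda>r. ys r + (Ax xs r - c r)) (\<lambda>r. Ax xs r - c r)"
      unfolding yy_def vinner_def by (intro sum.cong) auto
    then show ?thesis by (simp only: vinner_add_left)
  qed
  ultimately have "vinner p (\<lambda>r. Ax xs r - c r) (\<lambda>r. Ax xs r - c r) \<le> 0" by simp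
  then have feas: "\<forall>r<p. Ax xs r = c r"
    using coord_sq_le[of _ p "\<lambda>r. Ax xs r - c r"] by (smt (verit) power2_less_eq_zero_iff)
  have opt: "f i (xs i) + ereal (vinner (n i) (AT i ys) (xs i)) \<le> f i u + ereal (vinner (n i) (AT i ys) u)"
    if i: "i \<in> T" and u: "inR (n i) u" for i u
  proof (cases "f i u = \<infinity>")
    case True
    then show ?thesis by simp
  next
    case False
    define xx where "xx = xs(i := u)"
    have xxin: "\<forall>j\<in>T. inR (n j) (xx j)" unfolding xx_def using xs u by auto
    have fxx: "f j (xx j) \<noteq> \<infinity> \<and> f j (xx j) \<noteq> -\<infinity>" if "j \<in> T" for j
      unfolding xx_def using fxs[OF that] False not_minf[OF i u] by auto
    obtain b where fu: "f i u = ereal b" using False not_minf[OF i u] by (cases "f i u") auto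
    obtain a where fa: "f i (xs i) = ereal a" using fxs[OF i] by (cases "f i (xs i)") auto
    define R where "R = (\<Sum>j\<in>T - {i}. real_of_ereal (f j (xs j)))"
    have SFxx: "(\<Sum>j\<in>T. f j (xx j)) = ereal (b + R)"
    proof -
      have "(\<Sum>j\<in>T. f j (xx j)) = ereal (\<Sum>j\<in>T. real_of_ereal (f j (xx j)))" by (rule ereal_sum_fin) (auto simp: fxx)
      also have "(\<Sum>j\<in>T. real_of_ereal (f j (xx j))) = real_of_ereal (f i u) + R"
        unfolding xx_def R_def by (rule sum_upd[OF i, of "\<lambda>j v. real_of_ereal (f j v)"])
      finally show ?thesis using fu by simp
    qed
    have Fxe: "Fx = a + R" unfolding Fx_def R_def using sum_rem[OF i, of "\<lambda>j v. real_of_ereal (f j v)" xs] fa by simp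
    have axx: "Ax xx r - c r = (Ax xs r - c r) + (mat_vec p (n i) (A i) u r - mat_vec p (n i) (A i) (xs i) r)" for r
      unfolding Ax_def xx_def using sum_upd[OF i, of "\<lambda>j v. mat_vec p (n j) (A j) v r" xs u]
        sum_rem[OF i, of "\<lambda>j v. mat_vec p (n j) (A j) v r" xs] by simp
    have "vinner p ys (\<lambda>r. Ax xx r - c r) = vinner p ys (\<lambda>r. Ax xs r - c r) +
         (vinner p ys (mat_vec p (n i) (A i) u) - vinner p ys (mat_vec p (n i) (A i) (xs i)))"
      unfolding axx by (simp only: vinner_lin)
    also have "\<dots> = vinner p ys (\<lambda>r. Ax xs r - c r) + (vinner (n i) (AT i ys) u - vinner (n i) (AT i ys) (xs i))"
      by (simp add: transp_adj)
    finally have lin: "vinner p ys (\<lambda>r. Ax xx r - c r) = vinner p ys (\<lambda>r. Ax xs r - c r) + (vinner (n i) (AT i ys) u - vinner (n i) (AT i ys) (xs i))" .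
    have "ereal Fx + ereal (vinner p ys (\<lambda>r. Ax xs r - c r)) \<le> ereal (b + R) + ereal (vinner p ys (\<lambda>r. Ax xx r - c r))"
      using sd[OF xxin ys] unfolding SFe SFxx by blast
    then have "Fx + vinner p ys (\<lambda>r. Ax xs r - c r) \<le> b + R + vinner p ys (\<lambda>r. Ax xx r - c r)" by simp
    then show ?thesis unfolding fu fa lin Fxe by simp
  qed
  have "sol xs ys" unfolding sol_def using xs ys feas opt fxs by blast
  then show ?thesis by blast
qed

end




lemma conc_combo: "(\<lambda>j. conc q n p X1 Y1 j - conc q n p X2 Y2 j - e * (2 * conc q n p X3 Y3 j - conc q n p X4 Y4 j - conc q n p X5 Y5 j))
  = conc q n p (\<lambda>i t. X1 i t - X2 i t - e * (2 * X3 i t - X4 i t - X5 i t)) (\<lambda>t. Y1 t - Y2 t - e * (2 * Y3 t - Y4 t - Y5 t))"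
  by (auto simp: conc_def fun_eq_iff)

lemma conc_diff: "(\<lambda>j. conc q n p X1 Y1 j - conc q n p X2 Y2 j) = conc q n p (\<lambda>i t. X1 i t - X2 i t) (\<lambda>t. Y1 t - Y2 t)"
  by (auto simp: conc_def fun_eq_iff)

context frbmain begin

abbreviation Dm where "Dm \<equiv> blk_off n (Suc q) + p"
abbreviation ZZ where "ZZ k \<equiv> conc q n p (\<lambda>i. x i k) (y k)"

lemma M0c: "mat_vec Dm Dm (M0 q n p A) (conc q n p X Y) = conc q n p (\<lambda>i. AT i Y) (\<lambda>t. - Ax X t)"
  unfolding Ax_def by (rule M0_conc)

lemma small: "2 * \<eta> * Lt < 1"
proof -
  have "\<eta> * (2 * Lt) < 1" using eta Lt_pos by (simp add: less_divide_eq)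
  then show ?thesis by (simp add: algebra_simps)
qed

lemma core: assumes S: "sol xs ys"
  shows "frb_core Dm (M0 q n p A) Lt \<eta> ZZ (conc q n p xs ys)"
proof
  show "M0 q n p A s r = - M0 q n p A r s" for r s by (rule M0_skew)
  show "vnorm Dm (mat_vec Dm Dm (M0 q n p A) v) \<le> Lt * vnorm Dm v" for v
    by (rule spec_bound) (use M0_bound in simp)
  show "Lt > 0" by (rule Lt_pos)
  show "\<eta> > 0" by (rule eta(1))
  show "2 * \<eta> * Lt < 1" by (rule small)
  fix k :: int assume k: "k \<ge> 0"
  have Sx: "\<And>i. i \<in> T \<Longrightarrow> inR (n i) (xs i) \<and> f i (xs i) \<noteq> \<infinity> \<and>
    (\<forall>u. inR (n i) u \<longrightarrow> f i (xs i) + ereal (vinner (n i) (AT i ys) (xs i)) \<le> f i u + ereal (vinner (n i) (AT i ys) u))"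
    and Sy: "\<forall>r<p. Ax xs r = c r" using S unfolding sol_def by auto
  define Xv where "Xv = (\<lambda>i t. x i k t - x i (k+1) t - \<eta> * (2 * AT i (y k) t - AT i (y (k-1)) t - AT i ys t))"
  define Yv where "Yv = (\<lambda>t. y k t - y (k+1) t - \<eta> * (2 * (- Ax (\<lambda>i. x i k) t) - (- Ax (\<lambda>i. x i (k-1)) t) - (- Ax xs t)))"
  have vec: "(\<lambda>j. ZZ k j - ZZ (k+1) j - \<eta> * (2 * mat_vec Dm Dm (M0 q n p A) (ZZ k) j
             - mat_vec Dm Dm (M0 q n p A) (ZZ (k-1)) j - mat_vec Dm Dm (M0 q n p A) (conc q n p xs ys) j))
      = conc q n p Xv Yv"
    unfolding M0c conc_combo Xv_def Yv_def by simp
  have vec2: "(\<lambda>j. ZZ (k+1) j - conc q n p xs ys j) = conc q n p (\<lambda>i t. x i (k+1) t - xs i t) (\<lambda>t. y (k+1) t - ys t)"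
    by (rule conc_diff)
  have Y0: "vinner p Yv (\<lambda>t. y (k+1) t - ys t) = 0"
    unfolding vinner_def
  proof (rule sum.neutral, rule ballI)
    fix t assume "t \<in> {..<p}"
    then have "Yv t = 0" unfolding Yv_def using ystep[OF k, of t] Sy by (simp add: algebra_simps)
    then show "Yv t * (y (k+1) t - ys t) = 0" by simp
  qed
  have X0: "vinner (n i) (Xv i) (\<lambda>t. x i (k+1) t - xs i t) \<ge> 0" if i: "i \<in> T" for i
  proof -
    have cv: "convex_fn (n i) (f i)" and pr: "proper_fn (n i) (f i)" using f_convex f_proper i by auto
    have "vinner (n i) (\<lambda>t. xhat i k t - x i (k+1) t + \<eta> * AT i ys t) (\<lambda>t. x i (k+1) t - xs i t) \<ge> 0"
      using Sx[OF i] by (intro mono_step[OF cv pr eta(1) xstep[OF k i]]) auto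
    moreover have "(\<lambda>t. xhat i k t - x i (k+1) t + \<eta> * AT i ys t) = Xv i"
      unfolding xhat_def Xv_def by (auto simp: fun_eq_iff algebra_simps)
    ultimately show ?thesis by simp
  qed
  show "vinner Dm (\<lambda>j. ZZ k j - ZZ (k+1) j - \<eta> * (2 * mat_vec Dm Dm (M0 q n p A) (ZZ k) j
             - mat_vec Dm Dm (M0 q n p A) (ZZ (k-1)) j - mat_vec Dm Dm (M0 q n p A) (conc q n p xs ys) j))
             (\<lambda>j. ZZ (k+1) j - conc q n p xs ys j) \<ge> 0"
    unfolding vec vec2 vinner_conc Y0 using X0 by (auto intro!: sum_nonneg)
qed

end




lemma tendsto_close:
  fixes a b eps :: "nat \<Rightarrow> real"
  assumes "a \<longlonglongrightarrow> L" "\<And>j. \<bar>b j - a j\<bar> \<le> eps j" "eps \<longlonglongrightarrow> 0"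
  shows "b \<longlonglongrightarrow> L"
proof -
  have "(\<lambda>j. b j - a j) \<longlonglongrightarrow> 0"
    by (rule Lim_null_comparison[OF always_eventually assms(3)]) (use assms(2) in auto)
  from tendsto_add[OF this assms(1)] show ?thesis by simp
qed

lemma vinner_sum_transp:
  "(\<Sum>i\<in>T. vinner (n i) (mat_vec (n i) p (transp (A i)) yb) (X i)) = vinner p yb (\<lambda>r. \<Sum>i\<in>T. mat_vec p (n i) (A i) (X i) r)"
proof -
  have "(\<Sum>i\<in>T. vinner (n i) (mat_vec (n i) p (transp (A i)) yb) (X i)) = (\<Sum>i\<in>T. vinner p yb (mat_vec p (n i) (A i) (X i)))"
    by (simp add: transp_adj)
  also have "\<dots> = vinner p yb (\<lambda>r. \<Sum>i\<in>T. mat_vec p (n i) (A i) (X i) r)"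
    unfolding vinner_def by (simp add: sum_distrib_left sum.swap[of _ T])
  finally show ?thesis .
qed

context frbmain begin

lemma coord_diff: "r < m \<Longrightarrow> \<bar>U r - V r\<bar> \<le> sqrt (vinner m (\<lambda>j. U j - V j) (\<lambda>j. U j - V j))"
  using coord_le_vnorm[of r m "\<lambda>j. U j - V j"] frb_core.vnorm_sqrt by (simp add: vnorm_def vinner_def power2_eq_square)

lemma x_ZZ: "i \<in> T \<Longrightarrow> t < n i \<Longrightarrow> x i k t = ZZ k (blk_off n i + t)"
  by (simp add: conc_lo)
lemma y_ZZ: "t < p \<Longrightarrow> y k t = ZZ k (blk_off n (Suc q) + t)"
  by (simp add: conc_hi)
lemma off_lt_Dm: "i \<in> T \<Longrightarrow> t < n i \<Longrightarrow> blk_off n i + t < Dm"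
  using off_lt_N[of i q t n] by simp

lemma main_result:
  "\<exists>xs. (\<forall>i\<in>T. inR (n i) (xs i) \<and> (\<forall>j<n i. (\<lambda>k::nat. x i (int k) j) \<longlonglongrightarrow> xs i j)) \<and>
           (\<forall>r<p. (\<Sum>i\<in>T. mat_vec p (n i) (A i) (xs i) r) = c r) \<and>
           (\<forall>xx. (\<forall>i\<in>T. inR (n i) (xx i)) \<longrightarrow>
                 (\<forall>r<p. (\<Sum>i\<in>T. mat_vec p (n i) (A i) (xx i) r) = c r) \<longrightarrow>
                 (\<Sum>i\<in>T. f i (xs i)) \<le> (\<Sum>i\<in>T. f i (xx i)))"
proof -
  obtain xs0 ys0 where S0: "sol xs0 ys0" using saddle_sol by blast
  interpret C0: frb_core Dm "M0 q n p A" Lt \<eta> ZZ "conc q n p xs0 ys0" by (rule core[OF S0])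
  define Zs0 where "Zs0 = conc q n p xs0 ys0"
  obtain B where B: "\<And>j::nat. C0.EE (int j) \<le> B" using C0.conv(3) by blast
  have DDl: "(\<lambda>j::nat. C0.DD (int j)) \<longlonglongrightarrow> 0" by (rule C0.conv(2))
  define del where "del j = sqrt (C0.DD (int j))" for j
  have dell: "del \<longlonglongrightarrow> 0" unfolding del_def using tendsto_real_sqrt[OF DDl] by simp
  have dbound: "\<bar>ZZ k r - ZZ (k - 1) r\<bar> \<le> sqrt (C0.DD k)" if "r < Dm" for k r
    unfolding C0.DD_def C0.d_def by (rule coord_diff[OF that])
  have bnd: "bounded (range (\<lambda>j. ZZ (int j) r))" if r: "r < Dm" for r
  proof -
    have "\<bar>ZZ (int j) r\<bar> \<le> sqrt B + \<bar>Zs0 r\<bar>" for j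
    proof -
      have "\<bar>ZZ (int j) r - Zs0 r\<bar> \<le> sqrt (C0.EE (int j))"
        unfolding C0.EE_def C0.e_def Zs0_def by (rule coord_diff[OF r])
      also have "\<dots> \<le> sqrt B" using B[of j] by simp
      finally show ?thesis by linarith
    qed
    then show ?thesis unfolding bounded_real by blast
  qed
  obtain \<sigma> where sig: "strict_mono \<sigma>" and cv: "\<forall>r<Dm. convergent (\<lambda>j. ZZ (int (\<sigma> j)) r)"
    using bolzano_coords[of Dm "\<lambda>j r. ZZ (int j) r"] bnd by blast
  define Zb where "Zb r = (if r < Dm then lim (\<lambda>j. ZZ (int (\<sigma> j)) r) else 0)" for r
  have Z0: "(\<lambda>j. ZZ (int (\<sigma> j)) r) \<longlonglongrightarrow> Zb r" if "r < Dm" for r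
    using cv that unfolding Zb_def by (simp add: convergent_LIMSEQ_iff)
  have Zp: "(\<lambda>j. ZZ (int (\<sigma> j) + 1) r) \<longlonglongrightarrow> Zb r" if r: "r < Dm" for r
  proof (rule tendsto_close[OF Z0[OF r]])
    show "\<bar>ZZ (int (\<sigma> j) + 1) r - ZZ (int (\<sigma> j)) r\<bar> \<le> del (Suc (\<sigma> j))" for j
      using dbound[OF r, of "int (\<sigma> j) + 1"] unfolding del_def by (simp add: add.commute)
    show "(\<lambda>j. del (Suc (\<sigma> j))) \<longlonglongrightarrow> 0"
      using LIMSEQ_subseq_LIMSEQ[OF LIMSEQ_Suc[OF dell] sig] by (simp add: o_def)
  qed
  have Zm: "(\<lambda>j. ZZ (int (\<sigma> j) - 1) r) \<longlonglongrightarrow> Zb r" if r: "r < Dm" for r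
  proof (rule tendsto_close[OF Z0[OF r]])
    show "\<bar>ZZ (int (\<sigma> j) - 1) r - ZZ (int (\<sigma> j)) r\<bar> \<le> del (\<sigma> j)" for j
      using dbound[OF r, of "int (\<sigma> j)"] unfolding del_def by simp
    show "(\<lambda>j. del (\<sigma> j)) \<longlonglongrightarrow> 0"
      using LIMSEQ_subseq_LIMSEQ[OF dell sig] by (simp add: o_def)
  qed
  define xb where "xb i t = (if t < n i then Zb (blk_off n i + t) else 0)" for i t
  define yb where "yb t = (if t < p then Zb (blk_off n (Suc q) + t) else 0)" for t
  have shifts: "(\<lambda>j. ZZ (int (\<sigma> j) + s) r) \<longlonglongrightarrow> Zb r" if "s \<in> {-1, 0, 1}" "r < Dm" for s r
    using that Z0 Zp Zm by auto
  have xl: "(\<lambda>j. x i (int (\<sigma> j) + s) t) \<longlonglongrightarrow> xb i t" if "s \<in> {-1,0,1}" "i \<in> T" "t < n i" for s i t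
    using shifts[OF that(1) off_lt_Dm[OF that(2,3)]] that unfolding xb_def by (simp add: x_ZZ)
  have yl: "(\<lambda>j. y (int (\<sigma> j) + s) t) \<longlonglongrightarrow> yb t" if "s \<in> {-1,0,1}" "t < p" for s t
    using shifts[OF that(1), of "blk_off n (Suc q) + t"] that unfolding yb_def by (simp add: y_ZZ)
  have Axl: "(\<lambda>j. Ax (\<lambda>i. x i (int (\<sigma> j) + s)) r) \<longlonglongrightarrow> Ax xb r" if "s \<in> {-1,0,1}" for s r
    unfolding Ax_def mat_vec_def
    by (cases "r < p") (auto intro!: tendsto_intros xl[OF that])
  have ATl: "(\<lambda>j. AT i (y (int (\<sigma> j) + s)) t) \<longlonglongrightarrow> AT i yb t" if "s \<in> {-1,0,1}" for s i t
    unfolding mat_vec_def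
    by (cases "t < n i") (auto intro!: tendsto_intros yl[OF that])
  \<comment> \<open>the cluster point is a solution\<close>
  have feas: "Ax xb r = c r" if r: "r < p" for r
  proof -
    have lim1: "(\<lambda>j. y (int (\<sigma> j) + 1) r - y (int (\<sigma> j) + 0) r) \<longlonglongrightarrow> yb r - yb r"
      by (intro tendsto_intros yl r) auto
    have eq: "y (int (\<sigma> j) + 1) r - y (int (\<sigma> j) + 0) r
       = 2 * \<eta> * Ax (\<lambda>i. x i (int (\<sigma> j) + 0)) r - \<eta> * Ax (\<lambda>i. x i (int (\<sigma> j) + -1)) r - \<eta> * c r" for j
      using ystep[of "int (\<sigma> j)" r] by simp
    have lim1': "(\<lambda>j. 2 * \<eta> * Ax (\<lambda>i. x i (int (\<sigma> j) + 0)) r - \<eta> * Ax (\<lambda>i. x i (int (\<sigma> j) + -1)) r - \<eta> * c r) \<longlonglongrightarrow> yb r - yb r"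
      using lim1 unfolding eq .
    have lim2: "(\<lambda>j. 2 * \<eta> * Ax (\<lambda>i. x i (int (\<sigma> j) + 0)) r - \<eta> * Ax (\<lambda>i. x i (int (\<sigma> j) + -1)) r - \<eta> * c r)
        \<longlonglongrightarrow> 2 * \<eta> * Ax xb r - \<eta> * Ax xb r - \<eta> * c r"
      by (intro tendsto_intros Axl) auto
    have "yb r - yb r = 2 * \<eta> * Ax xb r - \<eta> * Ax xb r - \<eta> * c r"
      by (rule LIMSEQ_unique[OF lim1' lim2])
    then have "\<eta> * Ax xb r = \<eta> * c r" by linarith
    then show ?thesis using eta(1) by (metis less_irrefl mult_left_cancel)
  qed
  have xbin: "inR (n i) (xb i)" for i unfolding inR_def xb_def by simp
  have ybin: "inR p yb" unfolding inR_def yb_def by simp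
  have optb: "f i (xb i) \<le> ereal (real_of_ereal (f i u) + vinner (n i) (AT i yb) u - vinner (n i) (AT i yb) (xb i))"
    if i: "i \<in> T" and u: "inR (n i) u" "f i u \<noteq> \<infinity>" for i u
  proof -
    have cvx: "convex_fn (n i) (f i)" and pr: "proper_fn (n i) (f i)" and cl: "closed_fn (n i) (f i)"
      using f_convex f_proper f_closed i by auto
    define V where "V j = vinner (n i) (\<lambda>t. xhat i (int (\<sigma> j)) t - x i (int (\<sigma> j) + 1) t) (\<lambda>t. u t - x i (int (\<sigma> j) + 1) t)" for j
    define b where "b = real_of_ereal (f i u)"
    have sg: "\<eta> * real_of_ereal (f i (x i (int (\<sigma> j) + 1))) + V j \<le> \<eta> * b" for j
      unfolding V_def b_def by (rule prox_subgrad[OF cvx pr eta(1) xstep[OF _ i] u]) simp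
    have fin: "inR (n i) (x i (int (\<sigma> j) + 1)) \<and> f i (x i (int (\<sigma> j) + 1)) \<noteq> \<infinity> \<and> f i (x i (int (\<sigma> j) + 1)) \<noteq> -\<infinity>" for j
      using fin_x[OF _ i] by simp
    have le: "f i (x i (int (\<sigma> j) + 1)) \<le> ereal (b - V j / \<eta>)" for j
    proof -
      obtain a where a: "f i (x i (int (\<sigma> j) + 1)) = ereal a" using fin[of j] by (cases "f i (x i (int (\<sigma> j) + 1))") auto
      have "\<eta> * a \<le> \<eta> * (b - V j / \<eta>)" using sg[of j] eta(1) unfolding a by (simp add: algebra_simps)
      then have "a \<le> b - V j / \<eta>" using eta(1) by simp
      then show ?thesis unfolding a by simp
    qed
    define V0 where "V0 = vinner (n i) (\<lambda>t. xb i t - 2 * \<eta> * AT i yb t + \<eta> * AT i yb t - xb i t) (\<lambda>t. u t - xb i t)"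
    have xl0: "(\<lambda>j. x i (int (\<sigma> j)) t) \<longlonglongrightarrow> xb i t" if "t < n i" for t using xl[of 0 i t] i that by simp
    have xl1: "(\<lambda>j. x i (int (\<sigma> j) + 1) t) \<longlonglongrightarrow> xb i t" if "t < n i" for t using xl[of 1 i t] i that by simp
    have AT0: "(\<lambda>j. AT i (y (int (\<sigma> j))) t) \<longlonglongrightarrow> AT i yb t" for t using ATl[of 0 i t] by simp
    have ATm: "(\<lambda>j. AT i (y (int (\<sigma> j) - 1)) t) \<longlonglongrightarrow> AT i yb t" for t using ATl[of "-1" i t] by simp
    have Vl: "V \<longlonglongrightarrow> V0"
      unfolding V_def V0_def vinner_def xhat_def
      by (rule tendsto_sum, intro tendsto_intros xl0 xl1 AT0 ATm; simp)
    have "f i (xb i) \<le> liminf (\<lambda>j. f i (x i (int (\<sigma> j) + 1)))"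
      using cl xbin[of i] fin xl[of 1 i] i unfolding closed_fn_def by auto
    also have "\<dots> \<le> liminf (\<lambda>j. ereal (b - V j / \<eta>))"
      by (rule Liminf_mono) (use le in auto)
    also have "\<dots> = ereal (b - V0 / \<eta>)"
      by (rule lim_imp_Liminf) (use eta(1) in \<open>auto intro!: tendsto_intros Vl\<close>)
    also have "V0 = - \<eta> * (vinner (n i) (AT i yb) u - vinner (n i) (AT i yb) (xb i))"
      unfolding V0_def vinner_def by (simp add: sum_subtractf[symmetric] sum_distrib_left algebra_simps)
    finally have F1: "f i (xb i) \<le> ereal (b - (- \<eta> * (vinner (n i) (AT i yb) u - vinner (n i) (AT i yb) (xb i))) / \<eta>)" .
    have E: "b - (- \<eta> * (vinner (n i) (AT i yb) u - vinner (n i) (AT i yb) (xb i))) / \<eta>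
       = b + vinner (n i) (AT i yb) u - vinner (n i) (AT i yb) (xb i)" using eta(1) by simp
    show ?thesis using F1 unfolding E unfolding b_def .
  qed
  have solb: "sol xb yb"
    unfolding sol_def
  proof (intro conjI ballI allI impI)
    fix i assume i: "i \<in> T"
    show "inR (n i) (xb i)" by (rule xbin)
    obtain w where w: "inR (n i) w" "f i w \<noteq> \<infinity>" using f_proper i unfolding proper_fn_def by blast
    show fnot: "f i (xb i) \<noteq> \<infinity>" using optb[OF i w] by auto
    fix u assume u: "inR (n i) u"
    show "f i (xb i) + ereal (vinner (n i) (AT i yb) (xb i)) \<le> f i u + ereal (vinner (n i) (AT i yb) u)"
    proof (cases "f i u = \<infinity>")
      case True then show ?thesis by simp
    next
      case False
      have "f i u \<noteq> -\<infinity>" using not_minf[OF i u] .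
      then obtain b where b: "f i u = ereal b" using False by (cases "f i u") auto
      obtain a where a: "f i (xb i) = ereal a" using fnot not_minf[OF i xbin] by (cases "f i (xb i)") auto
      show ?thesis using optb[OF i u False] unfolding a b by simp
    qed
  next
    show "inR p yb" by (rule ybin)
  next
    fix r assume "r < p" then show "Ax xb r = c r" by (rule feas)
  qed
  \<comment> \<open>convergence of the whole sequence\<close>
  interpret C1: frb_core Dm "M0 q n p A" Lt \<eta> ZZ "conc q n p xb yb" by (rule core[OF solb])
  have Zbc: "conc q n p xb yb r = Zb r" if "r < Dm" for r
  proof (cases "r < blk_off n (Suc q)")
    case True
    define i where "i = blk_of q n r"
    have "i \<in> T" "blk_off n i \<le> r" "r < blk_off n i + n i" using blk_of_prop[OF True] unfolding i_def by auto
    then show ?thesis using True unfolding conc_def xb_def i_def[symmetric] by simp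
  next
    case False
    then show ?thesis using that unfolding conc_def yb_def by simp
  qed
  obtain l where l: "(\<lambda>j::nat. C1.EE (int j)) \<longlonglongrightarrow> l" using C1.conv(1) unfolding convergent_def by blast
  have "(\<lambda>j. C1.EE (int (\<sigma> j))) \<longlonglongrightarrow> (\<Sum>r<Dm. (Zb r - Zb r) * (Zb r - Zb r))"
    unfolding C1.EE_def C1.e_def vinner_def
    by (intro tendsto_intros) (auto simp: Zbc intro!: Z0)
  moreover have "(\<lambda>j. C1.EE (int (\<sigma> j))) \<longlonglongrightarrow> l" using LIMSEQ_subseq_LIMSEQ[OF l sig] by (simp add: o_def)
  ultimately have l0: "l = 0" using LIMSEQ_unique by fastforce
  have Zconv: "(\<lambda>j::nat. ZZ (int j) r) \<longlonglongrightarrow> Zb r" if r: "r < Dm" for r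
  proof (rule tendsto_close[OF tendsto_const])
    show "\<bar>ZZ (int j) r - Zb r\<bar> \<le> sqrt (C1.EE (int j))" for j
      unfolding C1.EE_def C1.e_def Zbc[OF r, symmetric] by (rule coord_diff[OF r])
    show "(\<lambda>j. sqrt (C1.EE (int j))) \<longlonglongrightarrow> 0" using tendsto_real_sqrt[OF l] l0 by simp
  qed
  have Sb: "\<forall>i\<in>T. inR (n i) (xb i) \<and> f i (xb i) \<noteq> \<infinity> \<and>
    (\<forall>u. inR (n i) u \<longrightarrow> f i (xb i) + ereal (vinner (n i) (AT i yb) (xb i)) \<le> f i u + ereal (vinner (n i) (AT i yb) u))"
    using solb unfolding sol_def by blast
  show ?thesis
  proof (intro exI[of _ xb] conjI ballI allI impI)
    fix i assume i: "i \<in> T"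
    show "inR (n i) (xb i)" by (rule xbin)
    fix t assume t: "t < n i"
    show "(\<lambda>k::nat. x i (int k) t) \<longlonglongrightarrow> xb i t"
      using Zconv[OF off_lt_Dm[OF i t]] i t unfolding xb_def by (simp add: x_ZZ)
  next
    fix r assume "r < p" then show "(\<Sum>i\<in>T. mat_vec p (n i) (A i) (xb i) r) = c r" using feas unfolding Ax_def by simp
  next
    fix xx assume xx: "\<forall>i\<in>T. inR (n i) (xx i)" and fx: "\<forall>r<p. (\<Sum>i\<in>T. mat_vec p (n i) (A i) (xx i) r) = c r"
    show "(\<Sum>i\<in>T. f i (xb i)) \<le> (\<Sum>i\<in>T. f i (xx i))"
    proof (cases "\<exists>i\<in>T. f i (xx i) = \<infinity>")
      case True
      then have "(\<Sum>i\<in>T. f i (xx i)) = \<infinity>" by (simp add: sum_Pinfty)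
      then show ?thesis by simp
    next
      case False
      have fxx: "f i (xx i) \<noteq> \<infinity> \<and> f i (xx i) \<noteq> -\<infinity>" if "i \<in> T" for i using False not_minf xx that by blast
      have fxb: "f i (xb i) \<noteq> \<infinity> \<and> f i (xb i) \<noteq> -\<infinity>" if "i \<in> T" for i using Sb not_minf xbin that by blast
      have each: "real_of_ereal (f i (xb i)) + vinner (n i) (AT i yb) (xb i) \<le> real_of_ereal (f i (xx i)) + vinner (n i) (AT i yb) (xx i)"
        if i: "i \<in> T" for i
      proof -
        obtain a where a: "f i (xb i) = ereal a" using fxb[OF i] by (cases "f i (xb i)") auto
        obtain b where b: "f i (xx i) = ereal b" using fxx[OF i] by (cases "f i (xx i)") auto
        have "f i (xb i) + ereal (vinner (n i) (AT i yb) (xb i)) \<le> f i (xx i) + ereal (vinner (n i) (AT i yb) (xx i))"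
          using Sb i xx by blast
        then show ?thesis unfolding a b by simp
      qed
      have "(\<Sum>i\<in>T. real_of_ereal (f i (xb i)) + vinner (n i) (AT i yb) (xb i)) \<le> (\<Sum>i\<in>T. real_of_ereal (f i (xx i)) + vinner (n i) (AT i yb) (xx i))"
        by (rule sum_mono) (rule each)
      moreover have "(\<Sum>i\<in>T. vinner (n i) (AT i yb) (xb i)) = (\<Sum>i\<in>T. vinner (n i) (AT i yb) (xx i))"
      proof -
        have "(\<Sum>i\<in>T. vinner (n i) (AT i yb) (xb i)) = vinner p yb (\<lambda>r. \<Sum>i\<in>T. mat_vec p (n i) (A i) (xb i) r)"
          by (rule vinner_sum_transp)
        also have "\<dots> = vinner p yb (\<lambda>r. \<Sum>i\<in>T. mat_vec p (n i) (A i) (xx i) r)"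
          unfolding vinner_def using fx feas unfolding Ax_def by (intro sum.cong) auto
        also have "\<dots> = (\<Sum>i\<in>T. vinner (n i) (AT i yb) (xx i))" by (rule vinner_sum_transp[symmetric])
        finally show ?thesis .
      qed
      ultimately have "(\<Sum>i\<in>T. real_of_ereal (f i (xb i))) \<le> (\<Sum>i\<in>T. real_of_ereal (f i (xx i)))"
        by (simp add: sum.distrib)
      moreover have "(\<Sum>i\<in>T. f i (xb i)) = ereal (\<Sum>i\<in>T. real_of_ereal (f i (xb i)))" by (rule ereal_sum_fin) (auto simp: fxb)
      moreover have "(\<Sum>i\<in>T. f i (xx i)) = ereal (\<Sum>i\<in>T. real_of_ereal (f i (xx i)))" by (rule ereal_sum_fin) (auto simp: fxx)
      ultimately show ?thesis by simp
    qed
  qed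
qed

end


theorem corollary2:
  fixes q p :: nat
    and n :: "nat \<Rightarrow> nat"
    and f :: "nat \<Rightarrow> (nat \<Rightarrow> real) \<Rightarrow> ereal"
    and A :: "nat \<Rightarrow> nat \<Rightarrow> nat \<Rightarrow> real"
    and c :: "nat \<Rightarrow> real"
    and Lt \<eta> :: real
    and x :: "nat \<Rightarrow> int \<Rightarrow> nat \<Rightarrow> real"
    and y :: "int \<Rightarrow> nat \<Rightarrow> real"
  assumes f_proper: "\<forall>i\<in>{1..q}. proper_fn (n i) (f i)"
    and f_closed: "\<forall>i\<in>{1..q}. closed_fn (n i) (f i)"
    and f_convex: "\<forall>i\<in>{1..q}. convex_fn (n i) (f i)"
    and c_in: "inR p c"
    and saddle: "\<exists>xs ys. (\<forall>i\<in>{1..q}. inR (n i) (xs i)) \<and> inR p ys \<and>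
        (\<forall>xx yy. (\<forall>i\<in>{1..q}. inR (n i) (xx i)) \<longrightarrow> inR p yy \<longrightarrow>
           (\<Sum>i\<in>{1..q}. f i (xs i)) + ereal (vinner p yy (\<lambda>r. (\<Sum>i\<in>{1..q}. mat_vec p (n i) (A i) (xs i) r) - c r))
             \<le> (\<Sum>i\<in>{1..q}. f i (xs i)) + ereal (vinner p ys (\<lambda>r. (\<Sum>i\<in>{1..q}. mat_vec p (n i) (A i) (xs i) r) - c r))
           \<and> (\<Sum>i\<in>{1..q}. f i (xs i)) + ereal (vinner p ys (\<lambda>r. (\<Sum>i\<in>{1..q}. mat_vec p (n i) (A i) (xs i) r) - c r))
             \<le> (\<Sum>i\<in>{1..q}. f i (xx i)) + ereal (vinner p ys (\<lambda>r. (\<Sum>i\<in>{1..q}. mat_vec p (n i) (A i) (xx i) r) - c r)))"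
    and Lt_pos: "Lt > 0"
    and M0_bound: "spec_norm (blk_off n (q+1) + p) (blk_off n (q+1) + p) (M0 q n p A) \<le> Lt"
    and eta: "0 < \<eta>" "\<eta> < 1 / (2 * Lt)"
    and init_x: "\<forall>i\<in>{1..q}. inR (n i) (x i 0) \<and> inR (n i) (x i (-1))"
    and init_y: "inR p (y 0) \<and> inR p (y (-1))"
    and x_step: "\<forall>k\<ge>0. \<forall>i\<in>{1..q}.
        (let xhat = (\<lambda>j. x i k j - 2 * \<eta> * mat_vec (n i) p (transp (A i)) (y k) j
                          + \<eta> * mat_vec (n i) p (transp (A i)) (y (k - 1)) j)
         in is_arg_min (\<lambda>u. ereal \<eta> * f i u + ereal ((1/2) * (vnorm (n i) (\<lambda>j. u j - xhat j))\<^sup>2))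
                       (inR (n i)) (x i (k + 1)))"
    and y_step: "\<forall>k\<ge>0. y (k + 1) = (\<lambda>r. y k r
        + 2 * \<eta> * (\<Sum>i\<in>{1..q}. mat_vec p (n i) (A i) (x i k) r)
        - \<eta> * (\<Sum>i\<in>{1..q}. mat_vec p (n i) (A i) (x i (k - 1)) r)
        - \<eta> * c r)"
  shows "\<exists>xs. (\<forall>i\<in>{1..q}. inR (n i) (xs i) \<and> (\<forall>j<n i. (\<lambda>k::nat. x i (int k) j) \<longlonglongrightarrow> xs i j)) \<and>
           (\<forall>r<p. (\<Sum>i\<in>{1..q}. mat_vec p (n i) (A i) (xs i) r) = c r) \<and>
           (\<forall>xx. (\<forall>i\<in>{1..q}. inR (n i) (xx i)) \<longrightarrow>
                 (\<forall>r<p. (\<Sum>i\<in>{1..q}. mat_vec p (n i) (A i) (xx i) r) = c r) \<longrightarrow>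
                 (\<Sum>i\<in>{1..q}. f i (xs i)) \<le> (\<Sum>i\<in>{1..q}. f i (xx i)))"
  proof -
  have "frbmain q p n f A c Lt \<eta> x y"
    by (unfold_locales; (rule assms)?)
  from frbmain.main_result[OF this] show ?thesis .
qed

end
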